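(* For every integer $n\ge 3$, let $M_n$ be the $(n-2)\times(n-2)$ symmetric pentadiagonal matrix with entries \[ (M_n)_{ij}=\begin{cases} 2 & \text{if } i=j=1,\\ 3 & \text{if } i=j=2,\\ 4 & \text{if } i=j \text{ and } 3\le i\le n-2,\\ -1 & \text{if } |i-j|=1 \text{ or } |i-j|=2,\\ 0 & \text{if } |i-j|\ge 3. \end{cases} \] Then $\det M_n = F_{2n-3}$. *)

theory Defs
  imports "Jordan_Normal_Form.Determinant" "HOL-Number_Theory.Fib"
begin

definition M_entry :: "nat \<Rightarrow> nat \<Rightarrow> int" where
  "M_entry i j =
     (if i = j then (if i = 1 then 2 else if i = 2 then 3 else 4)
      else if nat \<bar>int i - int j\<bar> \<le> 2 then -1 else 0)"

text \<open>The (n-2)x(n-2) matrix M_n; Jordan_Normal_Form matrices are 0-indexed,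
  so position (i,j) holds the paper's entry (i+1, j+1).\<close>
definition M :: "nat \<Rightarrow> int mat" where
  "M n = mat (n - 2) (n - 2) (\<lambda>(i, j). M_entry (i + 1) (j + 1))"

end

theory Submission
  imports Defs
begin

lemma schur1:
  fixes A :: "'a::field mat"
  assumes A: "A \<in> carrier_mat (Suc k) (Suc k)" and a: "A$$(0,0) \<noteq> 0"
  shows "det A = A$$(0,0) * det (mat k k (\<lambda>(i,j). A$$(Suc i,Suc j) - A$$(Suc i,0) * A$$(0,Suc j) / A$$(0,0)))"
proof -
  define a where "a = A$$(0,0)"
  define L :: "'a mat" where "L = mat (Suc k) (Suc k) (\<lambda>(i,j). if i = j then 1 else if j = 0 then - A$$(i,0) / a else 0)"
  define B where "B = mat k k (\<lambda>(i,j). A$$(Suc i,Suc j) - A$$(Suc i,0) * A$$(0,Suc j) / a)"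
  have L: "L \<in> carrier_mat (Suc k) (Suc k)" unfolding L_def by auto
  have dL: "det L = 1"
  proof -
    have "det L = prod_list (diag_mat L)"
      by (rule det_lower_triangular[OF _ L]) (auto simp: L_def)
    also have "diag_mat L = map (\<lambda>_. 1) [0..<Suc k]"
      unfolding diag_mat_def L_def by (intro map_cong) auto
    finally show ?thesis by (simp add: map_replicate_const)
  qed
  have prod: "L * A = four_block_mat (mat 1 1 (\<lambda>_. a)) (mat 1 k (\<lambda>(_,j). A$$(0,Suc j))) (0\<^sub>m k 1) B"
  proof (rule eq_matI)
    fix i j assume i: "i < dim_row (four_block_mat (mat 1 1 (\<lambda>_. a)) (mat 1 k (\<lambda>(_,j). A$$(0,Suc j))) (0\<^sub>m k 1) B)"
      and j: "j < dim_col (four_block_mat (mat 1 1 (\<lambda>_. a)) (mat 1 k (\<lambda>(_,j). A$$(0,Suc j))) (0\<^sub>m k 1) B)"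
    have i': "i < Suc k" and j': "j < Suc k" using i j by (auto simp: B_def)
    have "(L * A) $$ (i,j) = (\<Sum>l\<in>{0..<Suc k}. L $$ (i,l) * A $$ (l,j))"
      using i' j' A L by (auto simp: scalar_prod_def)
    also have "\<dots> = (if i = 0 then A$$(0,j) else A$$(i,j) - A$$(i,0) * A$$(0,j) / a)"
    proof (cases "i = 0")
      case True
      then have "(\<Sum>l\<in>{0..<Suc k}. L $$ (i,l) * A $$ (l,j)) = (\<Sum>l\<in>{0..<Suc k}. (if l = 0 then A$$(0,j) else 0))"
        using i' by (intro sum.cong) (auto simp: L_def)
      then show ?thesis using True by simp
    next
      case False
      then have "(\<Sum>l\<in>{0..<Suc k}. L $$ (i,l) * A $$ (l,j)) = (\<Sum>l\<in>{0..<Suc k}. (if l = i then A$$(i,j) else 0) + (if l = 0 then - A$$(i,0) / a * A$$(0,j) else 0))"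
        using i' by (intro sum.cong) (auto simp: L_def)
      also have "\<dots> = A$$(i,j) - A$$(i,0) * A$$(0,j) / a"
        using i' False by (simp add: sum.distrib)
      finally show ?thesis using False by simp
    qed
    also have "\<dots> = four_block_mat (mat 1 1 (\<lambda>_. a)) (mat 1 k (\<lambda>(_,j). A$$(0,Suc j))) (0\<^sub>m k 1) B $$ (i,j)"
      using i' j' a by (cases i; cases j) (auto simp: B_def a_def)
    finally show "(L * A) $$ (i,j) = four_block_mat (mat 1 1 (\<lambda>_. a)) (mat 1 k (\<lambda>(_,j). A$$(0,Suc j))) (0\<^sub>m k 1) B $$ (i,j)" .
  qed (use L A in \<open>auto simp: B_def\<close>)
  have "det (L * A) = det L * det A" by (rule det_mult[OF L A])
  also have "det (L * A) = det (mat 1 1 (\<lambda>_. a)) * det B"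
    unfolding prod by (rule det_four_block_mat_lower_left_zero_col) (auto simp: B_def)
  also have "det (mat 1 1 (\<lambda>_. a)) = a" by (subst det_single) auto
  finally show ?thesis using dL by (simp add: a_def B_def)
qed

definition P :: "real \<Rightarrow> real \<Rightarrow> real \<Rightarrow> nat \<Rightarrow> nat \<Rightarrow> real" where
  "P x y z i j = (if i = 0 \<and> j = 0 then x else if (i = 0 \<and> j = 1) \<or> (i = 1 \<and> j = 0) then y
     else if i = 1 \<and> j = 1 then z else if i = j then 4
     else if nat \<bar>int i - int j\<bar> \<le> 2 then -1 else 0)"

definition G :: "nat \<Rightarrow> real \<Rightarrow> real \<Rightarrow> real \<Rightarrow> real mat" where
  "G k x y z = mat k k (\<lambda>(i,j). P x y z i j)"

lemma G_step:
  assumes x: "x \<noteq> 0"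
  shows "det (G (Suc k) x y z) = x * det (G k (z - y^2/x) (-1 + y/x) (4 - 1/x))"
proof -
  have "det (G (Suc k) x y z) = x * det (mat k k (\<lambda>(i,j). P x y z (Suc i) (Suc j) - P x y z (Suc i) 0 * P x y z 0 (Suc j) / x))"
  proof -
    have c: "mat k k (\<lambda>(i,j). G (Suc k) x y z $$ (Suc i, Suc j) - G (Suc k) x y z $$ (Suc i, 0) * G (Suc k) x y z $$ (0, Suc j) / G (Suc k) x y z $$ (0,0))
      = mat k k (\<lambda>(i,j). P x y z (Suc i) (Suc j) - P x y z (Suc i) 0 * P x y z 0 (Suc j) / x)"
      by (rule cong_mat) (auto simp: G_def P_def)
    have "G (Suc k) x y z $$ (0,0) = x" by (simp add: G_def P_def)
    then show ?thesis using schur1[of "G (Suc k) x y z" k] x c by (simp add: G_def)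
  qed
  also have "mat k k (\<lambda>(i,j). P x y z (Suc i) (Suc j) - P x y z (Suc i) 0 * P x y z 0 (Suc j) / x)
     = G k (z - y^2/x) (-1 + y/x) (4 - 1/x)"
    unfolding G_def
  proof (rule cong_mat)
    fix i j assume "i < k" "j < k"
    then show "(case (i, j) of (i, j) \<Rightarrow> P x y z (Suc i) (Suc j) - P x y z (Suc i) 0 * P x y z 0 (Suc j) / x) =
       (case (i, j) of (i, j) \<Rightarrow> P (z - y\<^sup>2 / x) (- 1 + y / x) (4 - 1 / x) i j)" using x
      by (cases "i = 0"; cases "i = 1"; cases "j = 0"; cases "j = 1")
         (auto simp: P_def power2_eq_square field_simps nat_le_iff)
  qed simp_all
  finally show ?thesis .
qed

lemma G_fib:
  "det (G k (real (fib (2*j+3)) / real (fib (2*j+1))) (- real (fib (2*j+2)) / real (fib (2*j+1)))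
          ((real (fib (2*j+1)) + real (fib (2*j+3))) / real (fib (2*j+1))))
   = real (fib (2*(j+k)+1)) / real (fib (2*j+1))"
proof (induction k arbitrary: j)
  case 0
  have "fib (2*j+1) > 0" by (simp add: fib_neq_0_nat)
  then show ?case by (simp add: G_def)
next
  case (Suc k)
  define x where "x = real (fib (2*j+1))"
  define y where "y = real (fib (2*j+2))"
  have xpos: "x > 0" unfolding x_def by (simp add: fib_neq_0_nat)
  have ypos: "y > 0" unfolding y_def using fib_neq_0_nat[of "2*j+1"] by simp
  have f3: "real (fib (2*j+3)) = x + y" unfolding x_def y_def
    using fib.simps(3)[of "2*j+1"] by (simp add: numeral_3_eq_3)
  have f4: "real (fib (2*(Suc j)+2)) = x + 2*y" unfolding x_def y_def
    using fib.simps(3)[of "2*j+2"] fib.simps(3)[of "2*j+1"] by (simp add: numeral_3_eq_3 eval_nat_numeral)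
  have f5: "real (fib (2*(Suc j)+3)) = 2*x + 3*y" unfolding x_def y_def
    using fib.simps(3)[of "2*j+3"] fib.simps(3)[of "2*j+2"] fib.simps(3)[of "2*j+1"]
    by (simp add: numeral_3_eq_3 eval_nat_numeral)
  have f3': "real (fib (2*(Suc j)+1)) = x + y" using f3 by (simp add: eval_nat_numeral)
  have e: "2 * (Suc j + k) + 1 = 2*(j + Suc k) + 1" by simp
  have "det (G (Suc k) ((x+y)/x) (-y/x) ((x + (x+y))/x))
      = (x+y)/x * det (G k ((x + (x+y))/x - (-y/x)^2/((x+y)/x)) (-1 + (-y/x)/((x+y)/x)) (4 - 1/((x+y)/x)))"
    using xpos ypos by (intro G_step) (simp add: field_simps)
  also have "(x + (x+y))/x - (-y/x)^2/((x+y)/x) = (2*x+3*y)/(x+y)"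
  proof -
    have h1: "x + y \<noteq> 0" "x*x + x*y \<noteq> 0" "x * (x * x) + x * (x * y) \<noteq> 0" using xpos ypos by (auto simp: add_pos_pos) (smt (verit) mult_pos_pos)+
    show ?thesis using xpos ypos h1 by (simp add: field_simps power2_eq_square)
  qed
  also have "-1 + (-y/x)/((x+y)/x) = - (x+2*y)/(x+y)"
    using xpos ypos by (simp add: field_simps)
  also have "4 - 1/((x+y)/x) = ((x+y) + (2*x+3*y))/(x+y)"
    using xpos ypos by (simp add: field_simps)
  also have "det (G k ((2*x+3*y)/(x+y)) (- (x+2*y)/(x+y)) (((x+y) + (2*x+3*y))/(x+y)))
      = real (fib (2*(j + Suc k)+1)) / (x+y)"
    using Suc.IH[of "Suc j"] unfolding f3' f4 f5 e by simp
  finally have R: "det (G (Suc k) ((x+y)/x) (-y/x) ((x + (x+y))/x))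
      = (x+y)/x * (real (fib (2*(j + Suc k)+1)) / (x+y))" .
  have hxy: "x + y \<noteq> 0" using xpos ypos by simp
  have key0: "\<And>N. (x+y)/x * (N / (x+y)) = N / x"
  proof -
    fix N :: real
    have "(x+y)/x * (N/(x+y)) = (N/x) * ((x+y)/(x+y))"
      by (metis times_divide_times_eq mult.commute)
    also have "(x+y)/(x+y) = 1" using hxy by simp
    finally show "(x+y)/x * (N / (x+y)) = N / x" by simp
  qed
  have key: "(x+y)/x * (real (fib (2*(j + Suc k)+1)) / (x+y)) = real (fib (2*(j + Suc k)+1)) / x"
    by (rule key0)
  have e1: "real (fib (2*j+3)) / real (fib (2*j+1)) = (x+y)/x" using f3 x_def by simp
  have e2: "- real (fib (2*j+2)) / real (fib (2*j+1)) = -y/x" using x_def y_def by simp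
  have e3: "(real (fib (2*j+1)) + real (fib (2*j+3))) / real (fib (2*j+1)) = (x + (x+y))/x"
    using f3 x_def by simp
  have e1': "real (fib (2*j+3)) / x = (x+y)/x" using f3 by simp
  have e2': "- real (fib (2*j+2)) / x = -y/x" using y_def by simp
  have e3': "(x + real (fib (2*j+3))) / x = (x+(x+y))/x" using f3 by simp
  show ?case unfolding x_def[symmetric] e1' e2' e3' R key ..
qed

theorem mainTheorem1:
  fixes n :: nat
  assumes "n \<ge> 3"
  shows "det (M n) = int (fib (2 * n - 3))"
proof -
  define m where "m = n - 2"
  have m: "n = m + 2" using assms unfolding m_def by simp
  have "map_mat real_of_int (M n) = G m 2 (-1) 3"
    unfolding M_def G_def m
    by (rule eq_matI) (auto simp: M_entry_def P_def)
  then have "real_of_int (det (M n)) = det (G m 2 (-1) 3)"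
    by (metis of_int_hom.hom_det)
  also have "\<dots> = real (fib (2*m+1))"
    using G_fib[of m 0] by (simp add: numeral_3_eq_3 eval_nat_numeral)
  finally have "real_of_int (det (M n)) = real (fib (2*m+1))" .
  moreover have "2 * n - 3 = 2*m+1" using m by simp
  ultimately show ?thesis by (metis of_int_eq_iff of_int_of_nat_eq)
qed

end
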